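(* Let $(p_{ij})_{i,j\in\{0,1\}}$ be a transition matrix with all $p_{ij}\in(0,1)$ and $p_{ij}\ne\tfrac12$ for some $(i,j)$; for $i\in\{0,1\}$ let $I_n^i\sim B(n,p_{i0})$. Let $(X_n^i,Z_n^i)_{n\in\mathbb N_0}$, $i\in\{0,1\}$, be random variables with finite second moments such that $X_n^i=Z_n^i=0$ for $n\le1$ and, for all $n\ge2$ and $i\in\{0,1\}$, $$\begin{pmatrix}X_n^i\\ Z_n^i\end{pmatrix}\stackrel{d}{=}\begin{pmatrix}X^0_{I_n^i}\\ Z^0_{I_n^i}\end{pmatrix}+\begin{pmatrix}X^1_{n-I_n^i}\\ Z^1_{n-I_n^i}\end{pmatrix}+\begin{pmatrix}\eta_n^{i,1}\\ \eta_n^{i,2}\end{pmatrix},$$ with $(X^0_k,Z^0_k)_{k\le n}$, $(X^1_k,Z^1_k)_{k\le n}$, $I_n^i$ independent on the right, and $$\eta_n^{i,1}=\frac1H\Big(n\log n-\mathbb E\big[I_n^i\log I_n^i+(n-I_n^i)\log(n-I_n^i)\big]\Big)+\pi_{1-i}\frac{H_{1-i}-H_i}{H}n+\frac{H_1-H_0}{(p_{01}+p_{10})H}p_{i0}p_{i1}^{n-1}n,\quad \eta_n^{i,2}=n-\eta_n^{i,1}.$$ Let $\nu_Z^i(n)=\mathbb E[Z_n^i]$. Then there exists $C>0$ such that for $i\in\{0,1\}$ and all $n,m\in\mathbb N_0$, $|\nu_Z^i(n)-\nu_Z^i(m)|\le C|n-m|$.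
   Context: $0\log0:=0$. $\pi_0=p_{10}/(p_{01}+p_{10})$, $\pi_1=p_{01}/(p_{01}+p_{10})$, $H_i=-\sum_jp_{ij}\log p_{ij}$, $H=\pi_0H_0+\pi_1H_1$. *)

theory Defs
  imports "HOL-Probability.Probability"
begin

text \<open>Natural logarithm is used; the base is irrelevant since only ratios occur.
  Note ln 0 = 0 in Isabelle, so 0 * ln 0 = 0 matches the convention 0 log 0 := 0.\<close>

definition xlogx :: "real \<Rightarrow> real" where
  "xlogx x = x * ln x"

definition Hent :: "(nat \<Rightarrow> nat \<Rightarrow> real) \<Rightarrow> nat \<Rightarrow> real" where
  "Hent p i = - (\<Sum>j<2. xlogx (p i j))"

definition statpi :: "(nat \<Rightarrow> nat \<Rightarrow> real) \<Rightarrow> nat \<Rightarrow> real" where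
  "statpi p i = (if i = 0 then p 1 0 / (p 0 1 + p 1 0) else p 0 1 / (p 0 1 + p 1 0))"

definition Htot :: "(nat \<Rightarrow> nat \<Rightarrow> real) \<Rightarrow> real" where
  "Htot p = statpi p 0 * Hent p 0 + statpi p 1 * Hent p 1"

definition eta1 :: "(nat \<Rightarrow> nat \<Rightarrow> real) \<Rightarrow> nat \<Rightarrow> nat \<Rightarrow> real" where
  "eta1 p i n =
     (1 / Htot p) * (xlogx (real n)
        - measure_pmf.expectation (binomial_pmf n (p i 0))
            (\<lambda>k. xlogx (real k) + xlogx (real (n - k))))
     + statpi p (1 - i) * (Hent p (1 - i) - Hent p i) / Htot p * real n
     + (Hent p 1 - Hent p 0) / ((p 0 1 + p 1 0) * Htot p) * p i 0 * p i 1 ^ (n - 1) * real n"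

definition eta2 :: "(nat \<Rightarrow> nat \<Rightarrow> real) \<Rightarrow> nat \<Rightarrow> nat \<Rightarrow> real" where
  "eta2 p i n = real n - eta1 p i n"

end

theory Submission
  imports Defs "HOL-Real_Asymp.Real_Asymp"
begin


lemma distr_pair_snd':
  assumes A: "prob_space A" and B: "prob_space B"
  shows "distr (A \<Otimes>\<^sub>M B) B snd = B"
proof (intro measure_eqI)
  interpret A: prob_space A by fact
  interpret B: prob_space B by fact
  fix X assume X: "X \<in> sets (distr (A \<Otimes>\<^sub>M B) B snd)"
  from X have "emeasure (distr (A \<Otimes>\<^sub>M B) B snd) X = emeasure (A \<Otimes>\<^sub>M B) (space A \<times> X)"
    by (auto simp add: emeasure_distr space_pair_measure dest: sets.sets_into_space intro!: arg_cong2[where f=emeasure])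
  with X show "emeasure (distr (A \<Otimes>\<^sub>M B) B snd) X = emeasure B X"
    by (simp add: B.emeasure_pair_measure_Times A.emeasure_space_1)
qed simp

lemma int_snd:
  fixes g :: "'b \<Rightarrow> real"
  assumes A: "prob_space A" and B: "prob_space B" and g: "integrable B g"
  shows "integrable (A \<Otimes>\<^sub>M B) (\<lambda>x. g (snd x))"
    and "integral\<^sup>L (A \<Otimes>\<^sub>M B) (\<lambda>x. g (snd x)) = integral\<^sup>L B g"
proof -
  have gm: "g \<in> borel_measurable B" using g by auto
  have "integrable (distr (A \<Otimes>\<^sub>M B) B snd) g" using distr_pair_snd'[OF A B] g by simp
  then show "integrable (A \<Otimes>\<^sub>M B) (\<lambda>x. g (snd x))"
    using integrable_distr_eq[OF measurable_snd[of A B] gm] by simp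
  have "integral\<^sup>L (distr (A \<Otimes>\<^sub>M B) B snd) g = integral\<^sup>L (A \<Otimes>\<^sub>M B) (\<lambda>x. g (snd x))"
    by (rule integral_distr[OF measurable_snd gm])
  then show "integral\<^sup>L (A \<Otimes>\<^sub>M B) (\<lambda>x. g (snd x)) = integral\<^sup>L B g"
    using distr_pair_snd'[OF A B] by simp
qed

lemma int_pmf:
  fixes F :: "nat \<Rightarrow> 'a \<Rightarrow> real"
  assumes A: "prob_space A" and fin: "finite (set_pmf P)" and F: "\<And>k. integrable A (F k)"
  shows "integrable (A \<Otimes>\<^sub>M measure_pmf P) (\<lambda>x. F (snd x) (fst x))"
    and "integral\<^sup>L (A \<Otimes>\<^sub>M measure_pmf P) (\<lambda>x. F (snd x) (fst x))
          = (\<Sum>k\<in>set_pmf P. pmf P k * integral\<^sup>L A (F k))"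
proof -
  interpret A: prob_space A by fact
  interpret pair_sigma_finite A "measure_pmf P"
    by (intro pair_sigma_finite.intro A.sigma_finite_measure_axioms measure_pmf.sigma_finite_measure_axioms)
  have Fm: "\<And>k. F k \<in> borel_measurable A" using F by auto
  have sndm: "snd \<in> measurable (A \<Otimes>\<^sub>M measure_pmf P) (count_space UNIV)"
    using measurable_snd[of A "measure_pmf P"] by (simp add: measurable_cong_sets)
  have meas: "(\<lambda>x. F (snd x) (fst x)) \<in> borel_measurable (A \<Otimes>\<^sub>M measure_pmf P)"
    by (rule measurable_compose_countable'[where I=UNIV and g=snd and f="\<lambda>k x. F k (fst x)"])
       (use Fm sndm in auto)
  have inner: "\<And>x. (\<integral>y. norm (F (snd (x, y)) (fst (x, y))) \<partial>measure_pmf P)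
        = (\<Sum>k\<in>set_pmf P. pmf P k * \<bar>F k x\<bar>)"
    by (subst integral_measure_pmf[OF fin]) auto
  show int: "integrable (A \<Otimes>\<^sub>M measure_pmf P) (\<lambda>x. F (snd x) (fst x))"
  proof (rule Fubini_integrable[OF meas])
    show "integrable A (\<lambda>x. \<integral>y. norm (F (snd (x, y)) (fst (x, y))) \<partial>measure_pmf P)"
      unfolding inner by (auto intro!: integrable_sum integrable_mult_right integrable_abs F)
    show "AE x in A. integrable (measure_pmf P) (\<lambda>y. F (snd (x, y)) (fst (x, y)))"
      using fin by (auto intro: integrable_measure_pmf_finite)
  qed
  have "integral\<^sup>L (A \<Otimes>\<^sub>M measure_pmf P) (case_prod (\<lambda>x y. F y x))
        = (\<integral>y. (\<integral>x. F y x \<partial>A) \<partial>measure_pmf P)"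
    by (rule integral_snd[symmetric]) (use int in \<open>simp add: split_beta'\<close>)
  also have "\<dots> = (\<Sum>k\<in>set_pmf P. pmf P k * integral\<^sup>L A (F k))"
    by (subst integral_measure_pmf[OF fin]) auto
  finally show "integral\<^sup>L (A \<Otimes>\<^sub>M measure_pmf P) (\<lambda>x. F (snd x) (fst x))
          = (\<Sum>k\<in>set_pmf P. pmf P k * integral\<^sup>L A (F k))"
    by (simp add: split_beta')
qed

lemma int_triple1:
  fixes F :: "nat \<Rightarrow> 'a \<Rightarrow> real"
  assumes A: "prob_space A" and B: "prob_space B" and fin: "finite (set_pmf P)"
    and F: "\<And>k. integrable A (F k)"
  shows "integrable (A \<Otimes>\<^sub>M (B \<Otimes>\<^sub>M measure_pmf P)) (\<lambda>x. F (snd (snd x)) (fst x))"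
    and "integral\<^sup>L (A \<Otimes>\<^sub>M (B \<Otimes>\<^sub>M measure_pmf P)) (\<lambda>x. F (snd (snd x)) (fst x))
          = (\<Sum>k\<in>set_pmf P. pmf P k * integral\<^sup>L A (F k))"
proof -
  interpret A: prob_space A by fact
  interpret B: prob_space B by fact
  interpret N: prob_space "B \<Otimes>\<^sub>M measure_pmf P"
    by (intro prob_space_pair B measure_pmf.prob_space_axioms)
  interpret pair_sigma_finite A "B \<Otimes>\<^sub>M measure_pmf P"
    by (intro pair_sigma_finite.intro A.sigma_finite_measure_axioms N.sigma_finite_measure_axioms)
  have Fm: "\<And>k. F k \<in> borel_measurable A" using F by auto
  have sndm: "(\<lambda>x. snd (snd x)) \<in> measurable (A \<Otimes>\<^sub>M (B \<Otimes>\<^sub>M measure_pmf P)) (count_space UNIV)"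
  proof -
    have "(\<lambda>x. snd (snd x)) \<in> measurable (A \<Otimes>\<^sub>M (B \<Otimes>\<^sub>M measure_pmf P)) (measure_pmf P)"
      by measurable
    then show ?thesis by (simp add: measurable_cong_sets)
  qed
  have meas: "(\<lambda>x. F (snd (snd x)) (fst x)) \<in> borel_measurable (A \<Otimes>\<^sub>M (B \<Otimes>\<^sub>M measure_pmf P))"
    by (rule measurable_compose_countable'[where I=UNIV and g="\<lambda>x. snd (snd x)" and f="\<lambda>k x. F k (fst x)"])
       (use Fm sndm in auto)
  have innerI: "integrable (B \<Otimes>\<^sub>M measure_pmf P) (\<lambda>y. H (snd y) (fst y))"
    and inner: "integral\<^sup>L (B \<Otimes>\<^sub>M measure_pmf P) (\<lambda>y. H (snd y) (fst y))
          = (\<Sum>k\<in>set_pmf P. pmf P k * integral\<^sup>L B (H k))"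
    if "\<And>k. integrable B (H k)" for H :: "nat \<Rightarrow> 'b \<Rightarrow> real"
    using int_pmf[of B P H, OF B fin that] by auto
  have c1: "\<And>x. (\<integral>y. norm (F (snd (snd (x, y))) (fst (x, y))) \<partial>(B \<Otimes>\<^sub>M measure_pmf P))
        = (\<Sum>k\<in>set_pmf P. pmf P k * \<bar>F k x\<bar>)"
    using inner[of "\<lambda>k _. \<bar>F k _\<bar>"] by (simp add: B.prob_space)
  show int: "integrable (A \<Otimes>\<^sub>M (B \<Otimes>\<^sub>M measure_pmf P)) (\<lambda>x. F (snd (snd x)) (fst x))"
  proof (rule Fubini_integrable[OF meas])
    show "integrable A (\<lambda>x. \<integral>y. norm (F (snd (snd (x, y))) (fst (x, y))) \<partial>(B \<Otimes>\<^sub>M measure_pmf P))"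
      unfolding c1 by (auto intro!: integrable_sum integrable_mult_right integrable_abs F)
    show "AE x in A. integrable (B \<Otimes>\<^sub>M measure_pmf P) (\<lambda>y. F (snd (snd (x, y))) (fst (x, y)))"
      using innerI[of "\<lambda>k _. F k _"] by simp
  qed
  have "integral\<^sup>L (A \<Otimes>\<^sub>M (B \<Otimes>\<^sub>M measure_pmf P)) (case_prod (\<lambda>x y. F (snd y) x))
        = (\<integral>x. (\<integral>y. F (snd y) x \<partial>(B \<Otimes>\<^sub>M measure_pmf P)) \<partial>A)"
    by (rule integral_fst[symmetric]) (use int in \<open>simp add: split_beta'\<close>)
  also have "\<dots> = (\<integral>x. (\<Sum>k\<in>set_pmf P. pmf P k * F k x) \<partial>A)"
    using inner[of "\<lambda>k _. F k _"] by (simp add: B.prob_space)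
  also have "\<dots> = (\<Sum>k\<in>set_pmf P. pmf P k * integral\<^sup>L A (F k))"
    using F by (simp add: integral_sum integral_mult_right)
  finally show "integral\<^sup>L (A \<Otimes>\<^sub>M (B \<Otimes>\<^sub>M measure_pmf P)) (\<lambda>x. F (snd (snd x)) (fst x))
          = (\<Sum>k\<in>set_pmf P. pmf P k * integral\<^sup>L A (F k))"
    by (simp add: split_beta')
qed

lemma int_triple2:
  fixes G :: "nat \<Rightarrow> 'b \<Rightarrow> real"
  assumes A: "prob_space A" and B: "prob_space B" and fin: "finite (set_pmf P)"
    and G: "\<And>k. integrable B (G k)"
  shows "integrable (A \<Otimes>\<^sub>M (B \<Otimes>\<^sub>M measure_pmf P)) (\<lambda>x. G (snd (snd x)) (fst (snd x)))"
    and "integral\<^sup>L (A \<Otimes>\<^sub>M (B \<Otimes>\<^sub>M measure_pmf P)) (\<lambda>x. G (snd (snd x)) (fst (snd x)))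
          = (\<Sum>k\<in>set_pmf P. pmf P k * integral\<^sup>L B (G k))"
proof -
  have N: "prob_space (B \<Otimes>\<^sub>M measure_pmf P)"
    by (intro prob_space_pair B measure_pmf.prob_space_axioms)
  note I = int_pmf[OF B fin G]
  show "integrable (A \<Otimes>\<^sub>M (B \<Otimes>\<^sub>M measure_pmf P)) (\<lambda>x. G (snd (snd x)) (fst (snd x)))"
    using int_snd(1)[OF A N I(1)] .
  show "integral\<^sup>L (A \<Otimes>\<^sub>M (B \<Otimes>\<^sub>M measure_pmf P)) (\<lambda>x. G (snd (snd x)) (fst (snd x)))
          = (\<Sum>k\<in>set_pmf P. pmf P k * integral\<^sup>L B (G k))"
    using int_snd(2)[OF A N I(1)] I(2) by simp
qed

definition bsum :: "real \<Rightarrow> nat \<Rightarrow> (nat \<Rightarrow> real) \<Rightarrow> real" where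
  "bsum q n F = (\<Sum>k\<le>n. real (n choose k) * q ^ k * (1 - q) ^ (n - k) * F k)"

lemma set_pmf_binom_sub: "0 \<le> q \<Longrightarrow> q \<le> 1 \<Longrightarrow> set_pmf (binomial_pmf n q) \<subseteq> {..n}"
  by (auto simp: set_pmf_binomial_eq split: if_splits)

lemma sum_pmf_binom:
  assumes "0 \<le> q" "q \<le> 1"
  shows "(\<Sum>k\<in>set_pmf (binomial_pmf n q). pmf (binomial_pmf n q) k * F k) = bsum q n F"
proof -
  have "(\<Sum>k\<in>set_pmf (binomial_pmf n q). pmf (binomial_pmf n q) k * F k)
      = (\<Sum>k\<le>n. pmf (binomial_pmf n q) k * F k)"
    by (rule sum.mono_neutral_left) (use set_pmf_binom_sub[OF assms] in \<open>auto simp: set_pmf_eq\<close>)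
  then show ?thesis using assms by (simp add: bsum_def)
qed

lemma exp_binom:
  assumes "0 \<le> q" "q \<le> 1"
  shows "measure_pmf.expectation (binomial_pmf n q) F = bsum q n F"
proof -
  have "measure_pmf.expectation (binomial_pmf n q) F = (\<Sum>k\<le>n. pmf (binomial_pmf n q) k *\<^sub>R F k)"
    by (rule integral_measure_pmf) (use set_pmf_binom_sub[OF assms] in auto)
  then show ?thesis using assms by (simp add: bsum_def)
qed

lemma fin_binom: "0 \<le> q \<Longrightarrow> q \<le> 1 \<Longrightarrow> finite (set_pmf (binomial_pmf n q))"
  using set_pmf_binom_sub finite_subset by blast

lemma rec_expect:
  fixes M :: "'a measure" and X Z :: "nat \<Rightarrow> nat \<Rightarrow> 'a \<Rightarrow> real"
  assumes prob: "prob_space M"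
    and iX: "\<And>i n. i < 2 \<Longrightarrow> integrable M (X i n)"
    and iZ: "\<And>i n. i < 2 \<Longrightarrow> integrable M (Z i n)"
    and q: "0 \<le> q" "q \<le> 1" and i: "i < 2"
    and rec: "distr M borel (\<lambda>\<omega>. (X i n \<omega>, Z i n \<omega>)) =
       distr (M \<Otimes>\<^sub>M (M \<Otimes>\<^sub>M measure_pmf (binomial_pmf n q))) borel
         (\<lambda>(\<omega>1, \<omega>2, k).
            (X 0 k \<omega>1 + X 1 (n - k) \<omega>2 + c1,
             Z 0 k \<omega>1 + Z 1 (n - k) \<omega>2 + c2))"
  shows "integral\<^sup>L M (Z i n) = bsum q n (\<lambda>k. integral\<^sup>L M (Z 0 k) + integral\<^sup>L M (Z 1 (n - k))) + c2"
proof -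
  interpret M: prob_space M by fact
  let ?P = "binomial_pmf n q"
  let ?T = "M \<Otimes>\<^sub>M (M \<Otimes>\<^sub>M measure_pmf ?P)"
  interpret T: prob_space ?T
    by (intro prob_space_pair prob measure_pmf.prob_space_axioms)
  have fin: "finite (set_pmf ?P)" using fin_binom[OF q] .
  note X1 = int_triple1[OF prob prob fin, of "X 0"] and X2 = int_triple2[OF prob prob fin, of "\<lambda>k. X 1 (n - k)"]
  note Z1 = int_triple1[OF prob prob fin, of "Z 0"] and Z2 = int_triple2[OF prob prob fin, of "\<lambda>k. Z 1 (n - k)"]
  have [measurable]: "(\<lambda>x. X 0 (snd (snd x)) (fst x)) \<in> borel_measurable ?T"
     "(\<lambda>x. X 1 (n - snd (snd x)) (fst (snd x))) \<in> borel_measurable ?T"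
     "(\<lambda>x. Z 0 (snd (snd x)) (fst x)) \<in> borel_measurable ?T"
     "(\<lambda>x. Z 1 (n - snd (snd x)) (fst (snd x))) \<in> borel_measurable ?T"
    using X1(1) X2(1) Z1(1) Z2(1) iX iZ by auto
  have [measurable]: "X i n \<in> borel_measurable M" "Z i n \<in> borel_measurable M" using iX iZ i by auto
  have f_eq: "(\<lambda>(\<omega>1, \<omega>2, k).
            (X 0 k \<omega>1 + X 1 (n - k) \<omega>2 + c1,
             Z 0 k \<omega>1 + Z 1 (n - k) \<omega>2 + c2)) =
      (\<lambda>x. (X 0 (snd (snd x)) (fst x) + X 1 (n - snd (snd x)) (fst (snd x)) + c1,
            Z 0 (snd (snd x)) (fst x) + Z 1 (n - snd (snd x)) (fst (snd x)) + c2))"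
    by (auto simp: fun_eq_iff)
  have fm: "(\<lambda>x. (X 0 (snd (snd x)) (fst x) + X 1 (n - snd (snd x)) (fst (snd x)) + c1,
            Z 0 (snd (snd x)) (fst x) + Z 1 (n - snd (snd x)) (fst (snd x)) + c2)) \<in> borel_measurable ?T"
    by measurable
  have gm: "(\<lambda>\<omega>. (X i n \<omega>, Z i n \<omega>)) \<in> borel_measurable M" by measurable
  have sm: "snd \<in> borel_measurable (borel :: (real \<times> real) measure)"
    using measurable_snd[of "borel::real measure" "borel::real measure"] by (simp add: borel_prod)
  have "integral\<^sup>L M (Z i n) = integral\<^sup>L (distr M borel (\<lambda>\<omega>. (X i n \<omega>, Z i n \<omega>))) snd"
    by (subst integral_distr[OF gm sm]) auto
  also have "\<dots> = integral\<^sup>L ?T (\<lambda>x. Z 0 (snd (snd x)) (fst x) + Z 1 (n - snd (snd x)) (fst (snd x)) + c2)"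
    unfolding rec f_eq by (subst integral_distr[OF fm sm]) auto
  also have "\<dots> = integral\<^sup>L ?T (\<lambda>x. Z 0 (snd (snd x)) (fst x)) + integral\<^sup>L ?T (\<lambda>x. Z 1 (n - snd (snd x)) (fst (snd x))) + c2"
    using Z1(1) Z2(1) iZ by (simp add: T.prob_space)
  also have "\<dots> = bsum q n (\<lambda>k. integral\<^sup>L M (Z 0 k) + integral\<^sup>L M (Z 1 (n - k))) + c2"
    using Z1(2) Z2(2) iZ sum_pmf_binom[OF q] by (simp add: sum.distrib distrib_left bsum_def)
  finally show ?thesis .
qed



lemma bsum_add: "bsum q n (\<lambda>k. F k + G k) = bsum q n F + bsum q n G"
  by (simp add: bsum_def sum.distrib algebra_simps)

lemma bsum_diff: "bsum q n (\<lambda>k. F k - G k) = bsum q n F - bsum q n G"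
  by (simp add: bsum_def sum_subtractf algebra_simps)

lemma bsum_cmult: "bsum q n (\<lambda>k. c * F k) = c * bsum q n F"
  by (simp add: bsum_def sum_distrib_left algebra_simps)

lemma bsum_const: "bsum q n (\<lambda>k. c) = c"
proof -
  have "(\<Sum>k\<le>n. real (n choose k) * q ^ k * (1 - q) ^ (n - k)) = (q + (1 - q)) ^ n"
    by (subst binomial_ring) (simp add: atLeast0AtMost)
  then show ?thesis by (simp add: bsum_def sum_distrib_right[symmetric])
qed

lemma bsum_cong: "(\<And>k. k \<le> n \<Longrightarrow> F k = G k) \<Longrightarrow> bsum q n F = bsum q n G"
  by (simp add: bsum_def)

lemma bsum_mono:
  assumes "0 \<le> q" "q \<le> 1" "\<And>k. k \<le> n \<Longrightarrow> F k \<le> G k"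
  shows "bsum q n F \<le> bsum q n G"
  unfolding bsum_def using assms
  by (intro sum_mono mult_left_mono) auto

lemma bsum_abs:
  assumes "0 \<le> q" "q \<le> 1"
  shows "\<bar>bsum q n F\<bar> \<le> bsum q n (\<lambda>k. \<bar>F k\<bar>)"
  unfolding bsum_def using assms
  by (intro order_trans[OF sum_abs] sum_mono) (simp add: abs_mult)

lemma bsum_Suc:
  "bsum q (Suc n) F = bsum q n (\<lambda>k. q * F (Suc k) + (1 - q) * F k)"
proof -
  let ?r = "1 - q"
  have s1: "bsum q (Suc n) F = ?r ^ Suc n * F 0 +
      (\<Sum>k\<le>n. real (n choose k) * q ^ Suc k * ?r ^ (n - k) * F (Suc k)) +
      (\<Sum>k\<le>n. real (n choose Suc k) * q ^ Suc k * ?r ^ (n - k) * F (Suc k))"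
    unfolding bsum_def by (subst sum.atMost_Suc_shift) (simp add: sum.distrib algebra_simps)
  have "?r ^ Suc n * F 0 + (\<Sum>k\<le>n. real (n choose Suc k) * q ^ Suc k * ?r ^ (n - k) * F (Suc k))
      = (\<Sum>k\<le>Suc n. real (n choose k) * q ^ k * ?r ^ (Suc n - k) * F k)"
    by (subst sum.atMost_Suc_shift) simp
  also have "\<dots> = (\<Sum>k\<le>n. real (n choose k) * q ^ k * ?r ^ (Suc n - k) * F k)"
    by simp
  also have "\<dots> = (\<Sum>k\<le>n. real (n choose k) * q ^ k * ?r ^ (n - k) * (?r * F k))"
    by (intro sum.cong refl) (simp add: Suc_diff_le)
  finally have s2: "?r ^ Suc n * F 0 + (\<Sum>k\<le>n. real (n choose Suc k) * q ^ Suc k * ?r ^ (n - k) * F (Suc k))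
      = (\<Sum>k\<le>n. real (n choose k) * q ^ k * ?r ^ (n - k) * (?r * F k))" .
  have s3: "bsum q n (\<lambda>k. q * F (Suc k) + (1 - q) * F k)
     = (\<Sum>k\<le>n. real (n choose k) * q ^ Suc k * ?r ^ (n - k) * F (Suc k))
      + (\<Sum>k\<le>n. real (n choose k) * q ^ k * ?r ^ (n - k) * (?r * F k))"
    unfolding bsum_def sum.distrib[symmetric] by (intro sum.cong refl) (simp add: algebra_simps)
  show ?thesis using s1 s2 s3 by simp
qed

lemma bsum_id: "bsum q n real = real n * q"
proof (induction n)
  case 0
  then show ?case by (simp add: bsum_def)
next
  case (Suc n)
  have "bsum q (Suc n) real = bsum q n (\<lambda>k. real k + q)"
    by (subst bsum_Suc) (simp add: algebra_simps)
  also have "\<dots> = real n * q + q" by (simp add: bsum_add bsum_const Suc)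
  finally show ?case by (simp add: algebra_simps)
qed

lemma bsum_rev: "bsum q n (\<lambda>k. F (n - k)) = bsum (1 - q) n F"
  unfolding bsum_def
  by (rule sum.reindex_bij_witness[where i="\<lambda>k. n - k" and j="\<lambda>k. n - k"])
     (auto simp: binomial_symmetric[symmetric] algebra_simps)

lemma bsum_upd: "bsum q n (\<lambda>k. F k + (if k = n then D else 0)) = bsum q n F + q ^ n * D"
proof -
  have "bsum q n (\<lambda>k. F k + (if k = n then D else 0)) = bsum q n F +
     (\<Sum>k\<le>n. if k = n then real (n choose k) * q ^ k * (1 - q) ^ (n - k) * D else 0)"
    unfolding bsum_def sum.distrib[symmetric] by (intro sum.cong refl) (auto simp: algebra_simps)
  then show ?thesis by (simp add: sum.delta)
qed

lemma bsum_upd0: "bsum q n (\<lambda>k. F k + (if k = 0 then D else 0)) = bsum q n F + (1 - q) ^ n * D"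
proof -
  have "bsum q n (\<lambda>k. F k + (if k = 0 then D else 0)) = bsum q n F +
     (\<Sum>k\<le>n. if k = 0 then real (n choose k) * q ^ k * (1 - q) ^ (n - k) * D else 0)"
    unfolding bsum_def sum.distrib[symmetric] by (intro sum.cong refl) (auto simp: algebra_simps)
  then show ?thesis by (simp add: sum.delta)
qed

lemma bsum_inv:
  "q * bsum q n (\<lambda>k. 1 / (real k + 1)) = (1 - (1 - q) ^ Suc n) / (real n + 1)"
proof -
  let ?r = "1 - q"
  have "(real n + 1) * (q * bsum q n (\<lambda>k. 1 / (real k + 1)))
      = (\<Sum>k\<le>n. real (Suc n choose Suc k) * q ^ Suc k * ?r ^ (n - k))"
    unfolding bsum_def sum_distrib_left
  proof (intro sum.cong refl)
    fix k assume "k \<in> {..n}"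
    have e: "real (Suc n) * real (n choose k) = real (Suc n choose Suc k) * real (Suc k)"
      using Suc_times_binomial_eq[of n k] by (metis of_nat_mult)
    have e2: "real (n choose k) * (real n + 1) / (real k + 1) = real (Suc n choose Suc k)"
      using e by (simp add: field_simps)
    have "(real n + 1) * (q * (real (n choose k) * q ^ k * ?r ^ (n - k) * (1 / (real k + 1))))
        = (real (n choose k) * (real n + 1) / (real k + 1)) * q ^ Suc k * ?r ^ (n - k)"
      by (simp add: field_simps)
    then show "(real n + 1) * (q * (real (n choose k) * q ^ k * ?r ^ (n - k) * (1 / (real k + 1))))
        = real (Suc n choose Suc k) * q ^ Suc k * ?r ^ (n - k)"
      using e2 by simp
  qed
  also have "\<dots> = (\<Sum>k\<le>Suc n. real (Suc n choose k) * q ^ k * ?r ^ (Suc n - k)) - ?r ^ Suc n"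
    by (subst sum.atMost_Suc_shift) simp
  also have "(\<Sum>k\<le>Suc n. real (Suc n choose k) * q ^ k * ?r ^ (Suc n - k)) = (q + ?r) ^ Suc n"
    by (subst binomial_ring) (simp add: atLeast0AtMost)
  finally have "(real n + 1) * (q * bsum q n (\<lambda>k. 1 / (real k + 1))) = 1 - ?r ^ Suc n" by simp
  then show ?thesis by (simp add: field_simps)
qed



lemma aux_lin:
  fixes w K B \<psi> E A D :: real
  assumes "0 < 1 - w" "K * \<psi> \<le> (1 - w) * B * \<psi>" "E \<le> A - (2 - w) * (B * \<psi>) + w * D + K * \<psi>"
    "E = A - B * \<psi> + D"
  shows "D \<le> 0"
proof -
  have "(1 - w) * D \<le> 0" using assms(2-4) by (simp add: algebra_simps)
  then show ?thesis using assms(1) by (simp add: mult_le_0_iff)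
qed

lemma bsum_delta_n: "bsum q n (\<lambda>k. if k = n then D else 0) = q ^ n * D"
  using bsum_upd[of q n "\<lambda>_. 0" D] by (simp add: bsum_const)

lemma bsum_delta_0: "bsum q n (\<lambda>k. if k = 0 then D else 0) = (1 - q) ^ n * D"
  using bsum_upd0[of q n "\<lambda>_. 0" D] by (simp add: bsum_const)

lemma lip_core:
  fixes a t :: "nat \<Rightarrow> nat \<Rightarrow> real" and q :: "nat \<Rightarrow> real"
  assumes q: "\<And>i. i < 2 \<Longrightarrow> 0 < q i \<and> q i < 1"
    and rec: "\<And>i n. i < 2 \<Longrightarrow> 2 \<le> n \<Longrightarrow> a i n = bsum (q i) n (\<lambda>k. a 0 k + a 1 (n - k)) + t i n"
    and K: "0 \<le> K"
    and tb: "\<And>i n. i < 2 \<Longrightarrow> 2 \<le> n \<Longrightarrow> \<bar>t i (Suc n) - t i n\<bar> \<le> K / (real n + 1)"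
  shows "\<exists>A. \<forall>i<2. \<forall>n. \<bar>a i (Suc n) - a i n\<bar> \<le> A"
proof -
  define d where "d i n = a i (Suc n) - a i n" for i n
  have drec: "d i n = bsum (q i) n (\<lambda>k. q i * d 0 k + (1 - q i) * d 1 (n - k)) + (t i (Suc n) - t i n)"
    if i: "i < 2" and n: "2 \<le> n" for i n
  proof -
    have "a i (Suc n) = bsum (q i) (Suc n) (\<lambda>k. a 0 k + a 1 (Suc n - k)) + t i (Suc n)"
      using rec[of i "Suc n"] i n by simp
    also have "bsum (q i) (Suc n) (\<lambda>k. a 0 k + a 1 (Suc n - k))
       = bsum (q i) n (\<lambda>k. q i * (a 0 (Suc k) + a 1 (n - k)) + (1 - q i) * (a 0 k + a 1 (Suc (n - k))))"
      by (subst bsum_Suc) (intro bsum_cong, simp add: Suc_diff_le)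
    finally have e1: "a i (Suc n) = bsum (q i) n (\<lambda>k. q i * (a 0 (Suc k) + a 1 (n - k)) + (1 - q i) * (a 0 k + a 1 (Suc (n - k)))) + t i (Suc n)" .
    have e2: "a i n = bsum (q i) n (\<lambda>k. a 0 k + a 1 (n - k)) + t i n" using rec i n by simp
    have "d i n = bsum (q i) n (\<lambda>k. q i * (a 0 (Suc k) + a 1 (n - k)) + (1 - q i) * (a 0 k + a 1 (Suc (n - k))) - (a 0 k + a 1 (n - k))) + (t i (Suc n) - t i n)"
      unfolding d_def e1 e2 bsum_diff by simp
    also have "bsum (q i) n (\<lambda>k. q i * (a 0 (Suc k) + a 1 (n - k)) + (1 - q i) * (a 0 k + a 1 (Suc (n - k))) - (a 0 k + a 1 (n - k)))
       = bsum (q i) n (\<lambda>k. q i * d 0 k + (1 - q i) * d 1 (n - k))"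
      by (intro bsum_cong) (simp add: d_def algebra_simps)
    finally show ?thesis .
  qed
  define \<rho> where "\<rho> = max (q 0 ^ 3 + (1 - q 0) ^ 3) (q 1 ^ 3 + (1 - q 1) ^ 3)"
  have cube: "x ^ 3 + (1 - x) ^ 3 < 1" if "0 < x" "x < 1" for x :: real
  proof -
    have "x ^ 3 < x" using that by (simp add: power3_eq_cube) (metis mult_less_cancel_left1 mult_strict_mono' mult_1 less_eq_real_def mult_less_cancel_right1 nle_le)
    moreover have "(1 - x) ^ 3 < 1 - x" using that
      by (simp add: power3_eq_cube) (smt (verit) mult_less_cancel_left1 mult_strict_mono' mult_1)
    ultimately show ?thesis by simp
  qed
  have \<rho>1: "\<rho> < 1" unfolding \<rho>_def using cube q[of 0] q[of 1] by auto
  have wle: "q i ^ Suc n + (1 - q i) ^ Suc n \<le> \<rho>" if "i < 2" "2 \<le> n" for i n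
  proof -
    have "q i ^ Suc n \<le> q i ^ 3" using q[OF that(1)] that(2) by (intro power_decreasing) auto
    moreover have "(1 - q i) ^ Suc n \<le> (1 - q i) ^ 3" using q[OF that(1)] that(2) by (intro power_decreasing) auto
    moreover have "q i ^ 3 + (1 - q i) ^ 3 \<le> \<rho>" using that(1) unfolding \<rho>_def
      by (cases i) (auto simp: less_2_cases_iff)
    ultimately show ?thesis by simp
  qed
  define B where "B = K / (1 - \<rho>)"
  have B0: "0 \<le> B" using K \<rho>1 by (simp add: B_def)
  have KB: "K = (1 - \<rho>) * B" using \<rho>1 by (simp add: B_def)
  define A where "A = B + \<bar>d 0 0\<bar> + \<bar>d 1 0\<bar> + \<bar>d 0 1\<bar> + \<bar>d 1 1\<bar>"
  have main: "\<forall>j<2. \<bar>d j n\<bar> \<le> A - B / (real n + 1)" for n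
  proof (induction n rule: less_induct)
    case (less n)
    show ?case
    proof (cases "n < 2")
      case True
      have "B / (real n + 1) \<le> B" using B0 by (simp add: divide_le_eq mult_le_cancel_left1)
      moreover have "\<bar>d j n\<bar> \<le> A - B" if "j < 2" for j
        using True that unfolding A_def by (auto simp: less_2_cases_iff)
      ultimately show ?thesis by force
    next
      case False
      then have n2: "2 \<le> n" by simp
      define \<psi> where "\<psi> = 1 / (real n + 1)"
      have \<psi>0: "0 \<le> \<psi>" by (simp add: \<psi>_def)
      define \<beta> where "\<beta> k = A - B / (real k + 1)" for k
      define E where "E = max \<bar>d 0 n\<bar> \<bar>d 1 n\<bar>"
      define D where "D = E - \<beta> n"
      have bnd: "\<bar>d j k\<bar> \<le> \<beta> k + (if k = n then D else 0)" if "j < 2" "k \<le> n" for j k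
      proof (cases "k = n")
        case True
        then show ?thesis using that unfolding D_def E_def by (auto simp: less_2_cases_iff)
      next
        case False
        then have "k < n" using that by simp
        then show ?thesis using less.IH that False unfolding \<beta>_def by auto
      qed
      define w where "w i = q i ^ Suc n + (1 - q i) ^ Suc n" for i
      have step: "\<bar>d i n\<bar> \<le> A - (2 - w i) * (B * \<psi>) + w i * D + K * \<psi>" if i: "i < 2" for i
      proof -
        let ?q = "q i" and ?r = "1 - q i"
        have q01: "0 \<le> ?q" "?q \<le> 1" using q[OF i] by auto
        have "\<bar>d i n\<bar> \<le> \<bar>bsum ?q n (\<lambda>k. ?q * d 0 k + ?r * d 1 (n - k))\<bar> + \<bar>t i (Suc n) - t i n\<bar>"
          using drec[OF i n2] by simp
        also have "\<bar>t i (Suc n) - t i n\<bar> \<le> K * \<psi>" using tb[OF i n2] by (simp add: \<psi>_def)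
        also have "\<bar>bsum ?q n (\<lambda>k. ?q * d 0 k + ?r * d 1 (n - k))\<bar>
            \<le> bsum ?q n (\<lambda>k. \<bar>?q * d 0 k + ?r * d 1 (n - k)\<bar>)" by (rule bsum_abs[OF q01])
        also have "\<dots> \<le> bsum ?q n (\<lambda>k. ?q * (\<beta> k + (if k = n then D else 0)) + ?r * (\<beta> (n - k) + (if k = 0 then D else 0)))"
        proof (rule bsum_mono[OF q01])
          fix k assume k: "k \<le> n"
          have "\<bar>?q * d 0 k + ?r * d 1 (n - k)\<bar> \<le> ?q * \<bar>d 0 k\<bar> + ?r * \<bar>d 1 (n - k)\<bar>"
            using q01 by (intro order_trans[OF abs_triangle_ineq]) (simp add: abs_mult)
          also have "\<dots> \<le> ?q * (\<beta> k + (if k = n then D else 0)) + ?r * (\<beta> (n - k) + (if n - k = n then D else 0))"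
            using bnd[of 0 k] bnd[of 1 "n - k"] k q01
            by (intro add_mono mult_left_mono) auto
          also have "(if n - k = n then D else 0) = (if k = 0 then D else 0)" using k n2 by auto
          finally show "\<bar>?q * d 0 k + ?r * d 1 (n - k)\<bar> \<le> ?q * (\<beta> k + (if k = n then D else 0)) + ?r * (\<beta> (n - k) + (if k = 0 then D else 0))" .
        qed
        also have "\<dots> = ?q * (bsum ?q n \<beta> + ?q ^ n * D) + ?r * (bsum ?r n \<beta> + ?r ^ n * D)"
          by (simp add: bsum_add bsum_cmult bsum_delta_n bsum_delta_0 bsum_rev[of "q i" n \<beta>])
        also have "bsum ?q n \<beta> = A - B * bsum ?q n (\<lambda>k. 1 / (real k + 1))"
          unfolding \<beta>_def by (simp add: bsum_diff bsum_const bsum_cmult[symmetric])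
        also have "bsum ?r n \<beta> = A - B * bsum ?r n (\<lambda>k. 1 / (real k + 1))"
          unfolding \<beta>_def by (simp add: bsum_diff bsum_const bsum_cmult[symmetric])
        also have "?q * (A - B * bsum ?q n (\<lambda>k. 1 / (real k + 1)) + ?q ^ n * D) +
              ?r * (A - B * bsum ?r n (\<lambda>k. 1 / (real k + 1)) + ?r ^ n * D)
            = (?q + ?r) * A - B * (?q * bsum ?q n (\<lambda>k. 1 / (real k + 1)))
              - B * (?r * bsum ?r n (\<lambda>k. 1 / (real k + 1))) + w i * D"
          by (simp add: w_def algebra_simps)
        also have "?q * bsum ?q n (\<lambda>k. 1 / (real k + 1)) = (1 - ?r ^ Suc n) * \<psi>"
          by (simp add: bsum_inv \<psi>_def)
        also have "?r * bsum ?r n (\<lambda>k. 1 / (real k + 1)) = (1 - ?q ^ Suc n) * \<psi>"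
          using bsum_inv[of ?r n] by (simp add: \<psi>_def)
        also have "(?q + ?r) * A - B * ((1 - ?r ^ Suc n) * \<psi>) - B * ((1 - ?q ^ Suc n) * \<psi>) + w i * D
            = A - (2 - w i) * (B * \<psi>) + w i * D"
          by (simp add: w_def algebra_simps)
        finally show ?thesis by simp
      qed
      have "D \<le> 0"
      proof (rule ccontr)
        assume Dpos: "\<not> D \<le> 0"
        have "\<exists>j<2. E = \<bar>d j n\<bar>" unfolding E_def max_def
          by (rule exI[of _ "if \<bar>d 0 n\<bar> \<le> \<bar>d 1 n\<bar> then 1 else 0"]) auto
        then obtain j where j: "j < 2" "E = \<bar>d j n\<bar>" by blast
        have w1: "w j \<le> \<rho>" using wle[OF j(1) n2] by (simp add: w_def)
        have "K \<le> (1 - w j) * B" unfolding KB using w1 B0 by (intro mult_right_mono) auto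
        then have k1: "K * \<psi> \<le> (1 - w j) * B * \<psi>" using \<psi>0 by (rule mult_right_mono)
        have k2: "E \<le> A - (2 - w j) * (B * \<psi>) + w j * D + K * \<psi>" using step[OF j(1)] j(2) by simp
        have k3: "E = A - B * \<psi> + D" unfolding D_def \<beta>_def \<psi>_def by simp
        have "D \<le> 0" using aux_lin[OF _ k1 k2 k3] w1 \<rho>1 by simp
        then show False using Dpos by simp
      qed
      then have "E \<le> \<beta> n" unfolding D_def by simp
      then show ?thesis unfolding E_def \<beta>_def by (auto simp: less_2_cases_iff)
    qed
  qed
  have "\<forall>i<2. \<forall>n. \<bar>a i (Suc n) - a i n\<bar> \<le> A"
  proof (intro allI impI)
    fix i n assume i: "i < (2::nat)"
    have "0 \<le> B / (real n + 1)" using B0 by simp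
    then show "\<bar>a i (Suc n) - a i n\<bar> \<le> A" using main[of n] i unfolding d_def by force
  qed
  then show ?thesis by blast
qed



lemma e_bounds:
  fixes k :: nat
  defines "e \<equiv> ln (real k + 1) + 1 - (xlogx (real (Suc k)) - xlogx (real k))"
  shows "0 \<le> e \<and> e \<le> 1 / (real k + 1)"
proof (cases "k = 0")
  case True
  then show ?thesis by (simp add: e_def xlogx_def)
next
  case False
  define x where "x = real k"
  have x0: "0 < x" using False by (simp add: x_def)
  define \<delta> where "\<delta> = ln (x + 1) - ln x"
  have ee: "e = 1 - x * \<delta>" unfolding e_def \<delta>_def x_def xlogx_def by (simp add: algebra_simps)
  have d1: "\<delta> \<le> 1 / x"
  proof -
    have "ln ((x + 1) / x) \<le> (x + 1) / x - 1" using x0 by (intro ln_le_minus_one) simp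
    then show ?thesis using x0 by (simp add: \<delta>_def ln_div field_simps)
  qed
  have d2: "1 / (x + 1) \<le> \<delta>"
  proof -
    have "ln (x / (x + 1)) \<le> x / (x + 1) - 1" using x0 by (intro ln_le_minus_one) simp
    then show ?thesis using x0 by (simp add: \<delta>_def ln_div field_simps)
  qed
  have "x * \<delta> \<le> 1" using mult_left_mono[OF d1, of x] x0 by simp
  moreover have "x / (x + 1) \<le> x * \<delta>" using mult_left_mono[OF d2, of x] x0 by simp
  moreover have "1 - x / (x + 1) = 1 / (x + 1)" using x0 by (simp add: field_simps)
  ultimately show ?thesis unfolding ee x_def[symmetric] by linarith
qed

lemma log_bounds:
  fixes n :: nat and q :: real
  assumes q: "0 < q" "q < 1"
  defines "m \<equiv> (real n + 1) * q"
  shows "ln m \<le> bsum q n (\<lambda>k. ln (real k + 1))"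
    and "bsum q n (\<lambda>k. ln (real k + 1)) \<le> ln m + (1 - q) / m"
proof -
  have m0: "0 < m" using q by (simp add: m_def)
  have "bsum q n (\<lambda>k. ln m + 1 - m * (1 / (real k + 1))) \<le> bsum q n (\<lambda>k. ln (real k + 1))"
  proof (rule bsum_mono)
    fix k assume "k \<le> n"
    have "ln (m / (real k + 1)) \<le> m / (real k + 1) - 1" using m0 by (intro ln_le_minus_one) simp
    then show "ln m + 1 - m * (1 / (real k + 1)) \<le> ln (real k + 1)"
      using m0 by (simp add: ln_div)
  qed (use q in auto)
  moreover have "bsum q n (\<lambda>k. ln m + 1 - m * (1 / (real k + 1))) = ln m + 1 - m * bsum q n (\<lambda>k. 1 / (real k + 1))"
    by (simp add: bsum_diff bsum_const bsum_cmult[symmetric])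
  moreover have "m * bsum q n (\<lambda>k. 1 / (real k + 1)) = 1 - (1 - q) ^ Suc n"
    using bsum_inv[of q n] unfolding m_def by (simp add: field_simps)
  moreover have "0 \<le> (1 - q) ^ Suc n" using q by simp
  ultimately show "ln m \<le> bsum q n (\<lambda>k. ln (real k + 1))" by linarith
  have "bsum q n (\<lambda>k. ln (real k + 1)) \<le> bsum q n (\<lambda>k. (ln m - 1 + 1 / m) + (1 / m) * real k)"
  proof (rule bsum_mono)
    fix k assume "k \<le> n"
    have "ln ((real k + 1) / m) \<le> (real k + 1) / m - 1" using m0 by (intro ln_le_minus_one) simp
    then have "ln (real k + 1) - ln m \<le> (real k + 1) / m - 1" using m0 by (simp add: ln_div)
    moreover have "(real k + 1) / m = (1 / m) * real k + 1 / m" by (simp add: add_divide_distrib)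
    ultimately show "ln (real k + 1) \<le> (ln m - 1 + 1 / m) + (1 / m) * real k" by linarith
  qed (use q in auto)
  also have "\<dots> = ln m - 1 + 1 / m + (1 / m) * (real n * q)"
    by (simp only: bsum_add bsum_const bsum_cmult bsum_id)
  also have "\<dots> = ln m + (real n * q + 1 - m) / m" using m0 by (simp add: field_simps)
  also have "real n * q + 1 - m = 1 - q" unfolding m_def by (simp add: algebra_simps)
  finally show "bsum q n (\<lambda>k. ln (real k + 1)) \<le> ln m + (1 - q) / m" .
qed

lemma df_formula:
  "(xlogx (real (Suc n)) - bsum q (Suc n) (\<lambda>k. xlogx (real k) + xlogx (real (Suc n - k))))
   - (xlogx (real n) - bsum q n (\<lambda>k. xlogx (real k) + xlogx (real (n - k))))
   = (xlogx (real (Suc n)) - xlogx (real n))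
     - bsum q n (\<lambda>k. q * (xlogx (real (Suc k)) - xlogx (real k))
                     + (1 - q) * (xlogx (real (Suc (n - k))) - xlogx (real (n - k))))"
proof -
  have "bsum q (Suc n) (\<lambda>k. xlogx (real k) + xlogx (real (Suc n - k)))
     = bsum q n (\<lambda>k. q * (xlogx (real (Suc k)) + xlogx (real (n - k)))
          + (1 - q) * (xlogx (real k) + xlogx (real (Suc (n - k)))))"
    by (subst bsum_Suc) (intro bsum_cong, simp add: Suc_diff_le)
  moreover have "bsum q n (\<lambda>k. q * (xlogx (real (Suc k)) + xlogx (real (n - k)))
          + (1 - q) * (xlogx (real k) + xlogx (real (Suc (n - k)))))
      - bsum q n (\<lambda>k. xlogx (real k) + xlogx (real (n - k)))
     = bsum q n (\<lambda>k. q * (xlogx (real (Suc k)) - xlogx (real k))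
                     + (1 - q) * (xlogx (real (Suc (n - k))) - xlogx (real (n - k))))"
    unfolding bsum_diff[symmetric] by (intro bsum_cong) (simp add: algebra_simps)
  ultimately show ?thesis by simp
qed

lemma df_bound:
  assumes q: "0 < q" "q < 1"
  shows "\<bar>((xlogx (real (Suc n)) - bsum q (Suc n) (\<lambda>k. xlogx (real k) + xlogx (real (Suc n - k))))
   - (xlogx (real n) - bsum q n (\<lambda>k. xlogx (real k) + xlogx (real (n - k)))))
   + (xlogx q + xlogx (1 - q))\<bar> \<le> 2 / (real n + 1)"
proof -
  define r where "r = 1 - q"
  have r: "0 < r" "r < 1" "q + r = 1" using q by (auto simp: r_def)
  define h where "h k = xlogx (real (Suc k)) - xlogx (real k)" for k
  define L where "L k = ln (real k + 1)" for k
  define e where "e k = L k + 1 - h k" for k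
  have eb: "0 \<le> e k" "e k \<le> 1 / (real k + 1)" for k
    using e_bounds[of k] unfolding e_def L_def h_def by auto
  have hL: "h k = L k + 1 - e k" for k by (simp add: e_def)
  have "(xlogx (real (Suc n)) - bsum q (Suc n) (\<lambda>k. xlogx (real k) + xlogx (real (Suc n - k))))
   - (xlogx (real n) - bsum q n (\<lambda>k. xlogx (real k) + xlogx (real (n - k))))
    = h n - bsum q n (\<lambda>k. q * h k + r * h (n - k))"
    unfolding df_formula h_def r_def by simp
  also have "\<dots> = h n - q * bsum q n h - r * bsum r n h"
    by (simp add: bsum_add bsum_cmult bsum_rev r_def)
  also have "bsum q n h = bsum q n L + 1 - bsum q n e"
    unfolding hL by (simp add: bsum_add bsum_diff bsum_const)
  also have "bsum r n h = bsum r n L + 1 - bsum r n e"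
    unfolding hL by (simp add: bsum_add bsum_diff bsum_const)
  finally have D: "(xlogx (real (Suc n)) - bsum q (Suc n) (\<lambda>k. xlogx (real k) + xlogx (real (Suc n - k))))
   - (xlogx (real n) - bsum q n (\<lambda>k. xlogx (real k) + xlogx (real (n - k))))
    = h n - q * (bsum q n L + 1 - bsum q n e) - r * (bsum r n L + 1 - bsum r n e)" .
  define \<psi> where "\<psi> = 1 / (real n + 1)"
  have lq1: "ln ((real n + 1) * q) \<le> bsum q n L" and lq2: "bsum q n L \<le> ln ((real n + 1) * q) + r / ((real n + 1) * q)"
    using log_bounds[OF q, of n] unfolding L_def r_def by auto
  have lr1: "ln ((real n + 1) * r) \<le> bsum r n L" and lr2: "bsum r n L \<le> ln ((real n + 1) * r) + q / ((real n + 1) * r)"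
    using log_bounds[OF r(1,2), of n] unfolding L_def r_def by auto
  have lnq: "ln ((real n + 1) * q) = L n + ln q" using q by (simp add: ln_mult L_def)
  have lnr: "ln ((real n + 1) * r) = L n + ln r" using r by (simp add: ln_mult L_def)
  have Q1: "q * (L n + ln q) \<le> q * bsum q n L" using lq1 lnq q by (intro mult_left_mono) auto
  have Q2: "q * bsum q n L \<le> q * (L n + ln q) + r * \<psi>"
  proof -
    have "q * bsum q n L \<le> q * (L n + ln q + r / ((real n + 1) * q))"
      using lq2 lnq q by (intro mult_left_mono) auto
    also have "r / ((real n + 1) * q) = (r * \<psi>) / q" by (simp add: \<psi>_def)
    also have "q * (L n + ln q + (r * \<psi>) / q) = q * (L n + ln q) + r * \<psi>" using q by (simp add: distrib_left)
    finally show ?thesis .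
  qed
  have R1: "r * (L n + ln r) \<le> r * bsum r n L" using lr1 lnr r by (intro mult_left_mono) auto
  have R2: "r * bsum r n L \<le> r * (L n + ln r) + q * \<psi>"
  proof -
    have "r * bsum r n L \<le> r * (L n + ln r + q / ((real n + 1) * r))"
      using lr2 lnr r by (intro mult_left_mono) auto
    also have "q / ((real n + 1) * r) = (q * \<psi>) / r" by (simp add: \<psi>_def)
    also have "r * (L n + ln r + (q * \<psi>) / r) = r * (L n + ln r) + q * \<psi>" using r by (simp add: distrib_left)
    finally show ?thesis .
  qed
  have E1: "0 \<le> q * bsum q n e" "q * bsum q n e \<le> \<psi>"
  proof -
    have "0 \<le> bsum q n e" using bsum_mono[of q n "\<lambda>_. 0" e] eb q by (simp add: bsum_const)
    then show "0 \<le> q * bsum q n e" using q by simp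
    have "bsum q n e \<le> bsum q n (\<lambda>k. 1 / (real k + 1))" using eb q by (intro bsum_mono) auto
    then have "q * bsum q n e \<le> q * bsum q n (\<lambda>k. 1 / (real k + 1))" using q by (intro mult_left_mono) auto
    also have "\<dots> = (1 - (1 - q) ^ Suc n) * \<psi>" by (simp add: bsum_inv \<psi>_def)
    also have "\<dots> \<le> \<psi>"
      using mult_right_mono[of "1 - (1 - q) ^ Suc n" 1 \<psi>] q by (simp add: \<psi>_def)
    finally show "q * bsum q n e \<le> \<psi>" .
  qed
  have E2: "0 \<le> r * bsum r n e" "r * bsum r n e \<le> \<psi>"
  proof -
    have "0 \<le> bsum r n e" using bsum_mono[of r n "\<lambda>_. 0" e] eb r by (simp add: bsum_const)
    then show "0 \<le> r * bsum r n e" using r by simp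
    have "bsum r n e \<le> bsum r n (\<lambda>k. 1 / (real k + 1))" using eb r by (intro bsum_mono) auto
    then have "r * bsum r n e \<le> r * bsum r n (\<lambda>k. 1 / (real k + 1))" using r by (intro mult_left_mono) auto
    also have "\<dots> = (1 - (1 - r) ^ Suc n) * \<psi>" by (simp add: bsum_inv \<psi>_def)
    also have "\<dots> \<le> \<psi>"
      using mult_right_mono[of "1 - (1 - r) ^ Suc n" 1 \<psi>] r by (simp add: \<psi>_def)
    finally show "r * bsum r n e \<le> \<psi>" .
  qed
  have en: "0 \<le> e n" "e n \<le> \<psi>" using eb[of n] by (auto simp: \<psi>_def)
  have xl: "xlogx q + xlogx (1 - q) = q * ln q + r * ln r" by (simp add: xlogx_def r_def)
  have lin: "q * (L n + ln q) + r * (L n + ln r) = L n + q * ln q + r * ln r"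
    using r(3) by (simp add: algebra_simps) (metis distrib_right mult_1 add.commute)
  have sq: "q * (bsum q n L + 1 - bsum q n e) = q * bsum q n L + q - q * bsum q n e" by (simp add: algebra_simps)
  have sr: "r * (bsum r n L + 1 - bsum r n e) = r * bsum r n L + r - r * bsum r n e" by (simp add: algebra_simps)
  have qr\<psi>: "q * \<psi> + r * \<psi> = \<psi>" using r(3) by (metis distrib_right mult_1)
  have main: "\<bar>h n - q * (bsum q n L + 1 - bsum q n e) - r * (bsum r n L + 1 - bsum r n e)
      + (q * ln q + r * ln r)\<bar> \<le> 2 * \<psi>"
    unfolding sq sr using hL[of n] Q1 Q2 R1 R2 E1 E2 en lin r(3) qr\<psi> by linarith
  show ?thesis unfolding D xl using main by (simp add: \<psi>_def)
qed



lemma geo_bound: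
  fixes r :: real
  assumes "0 < r" "r < 1"
  shows "\<exists>G\<ge>0. \<forall>m. (real m + 2) ^ 2 * r ^ m \<le> G"
proof -
  have "(\<lambda>m. (real m + 2) ^ 2 * r ^ m) \<longlonglongrightarrow> 0" using assms by real_asymp
  then have "Bseq (\<lambda>m. (real m + 2) ^ 2 * r ^ m)" by (intro convergent_imp_Bseq convergentI)
  then obtain G where G: "G > 0" "\<And>m. norm ((real m + 2) ^ 2 * r ^ m) \<le> G" by (auto simp: Bseq_def)
  have "(real m + 2) ^ 2 * r ^ m \<le> G" for m using G(2)[of m] by simp
  then show ?thesis using G(1) by (intro exI[of _ G]) auto
qed

lemma xlogx_neg: "0 < x \<Longrightarrow> x < 1 \<Longrightarrow> xlogx x < 0"
  unfolding xlogx_def by (simp add: mult_pos_neg)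

lemma Hent_eq: "Hent p j = - (xlogx (p j 0) + xlogx (p j 1))"
  by (simp add: Hent_def numeral_2_eq_2)

lemma toll_bound:
  fixes p :: "nat \<Rightarrow> nat \<Rightarrow> real"
  assumes stoch: "\<And>i. i < 2 \<Longrightarrow> p i 0 + p i 1 = 1"
    and pos: "\<And>i j. i < 2 \<Longrightarrow> j < 2 \<Longrightarrow> 0 < p i j \<and> p i j < 1"
    and i: "i < 2"
  shows "\<exists>K\<ge>0. \<forall>n\<ge>2. \<bar>eta2 p i (Suc n) - eta2 p i n\<bar> \<le> K / (real n + 1)"
proof -
  define q where "q = p i 0"
  define r where "r = p i 1"
  have q: "0 < q" "q < 1" using pos[OF i, of 0] by (auto simp: q_def)
  have r: "0 < r" "r < 1" using pos[OF i, of 1] by (auto simp: r_def)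
  have rq: "r = 1 - q" using stoch[OF i] by (simp add: q_def r_def)
  have Hp: "0 < Hent p j" if "j < 2" for j
    using xlogx_neg[of "p j 0"] xlogx_neg[of "p j 1"] pos[OF that, of 0] pos[OF that, of 1]
    by (simp add: Hent_eq)
  have s0: "0 < p 0 1 + p 1 0" using pos[of 0 1] pos[of 1 0] by simp
  have pi0: "0 < statpi p 0" "0 < statpi p 1" using pos[of 0 1] pos[of 1 0] s0
    by (auto simp: statpi_def)
  define H where "H = Htot p"
  have H0: "0 < H" unfolding H_def Htot_def using Hp[of 0] Hp[of 1] pi0
    by (simp add: add_pos_pos)
  define cc where "cc = statpi p (1 - i) * (Hent p (1 - i) - Hent p i) / Htot p"
  have canc: "1 - Hent p i / H - cc = 0"
  proof -
    have sum1: "statpi p 0 + statpi p 1 = 1" using s0 by (simp add: statpi_def add_divide_distrib[symmetric])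
    have "H - Hent p i - statpi p (1 - i) * (Hent p (1 - i) - Hent p i) = 0"
    proof (cases "i = 0")
      case True
      have "H - Hent p 0 - statpi p 1 * (Hent p 1 - Hent p 0) = Hent p 0 * (statpi p 0 + statpi p 1 - 1)"
        unfolding H_def Htot_def by (simp add: algebra_simps)
      then show ?thesis using True sum1 by simp
    next
      case False
      then have i1: "i = 1" using i by simp
      have "H - Hent p 1 - statpi p 0 * (Hent p 0 - Hent p 1) = Hent p 1 * (statpi p 0 + statpi p 1 - 1)"
        unfolding H_def Htot_def by (simp add: algebra_simps)
      then show ?thesis using i1 sum1 by simp
    qed
    moreover have "1 - Hent p i / H - cc = (H - Hent p i - statpi p (1 - i) * (Hent p (1 - i) - Hent p i)) / H"
      using H0 unfolding cc_def H_def[symmetric] by (simp add: diff_divide_distrib)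
    ultimately show ?thesis by simp
  qed
  define \<Gamma> where "\<Gamma> = (Hent p 1 - Hent p 0) / ((p 0 1 + p 1 0) * Htot p) * p i 0"
  obtain Gb where Gb: "Gb \<ge> 0" "\<And>m. (real m + 2) ^ 2 * r ^ m \<le> Gb" using geo_bound[OF r] by blast
  define F where "F m = xlogx (real m) - bsum q m (\<lambda>k. xlogx (real k) + xlogx (real (m - k)))" for m
  have eta1_eq: "eta1 p i m = (1 / H) * F m + cc * real m + \<Gamma> * r ^ (m - 1) * real m" for m
    unfolding eta1_def F_def cc_def \<Gamma>_def H_def
    using exp_binom[of q m "\<lambda>k. xlogx (real k) + xlogx (real (m - k))"] q
    by (simp add: q_def r_def)
  define K where "K = 2 / H + 2 * \<bar>\<Gamma>\<bar> * Gb"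
  have K0: "0 \<le> K" using H0 Gb by (simp add: K_def)
  have "\<bar>eta2 p i (Suc n) - eta2 p i n\<bar> \<le> K / (real n + 1)" if n: "2 \<le> n" for n
  proof -
    define \<psi> where "\<psi> = 1 / (real n + 1)"
    have \<psi>0: "0 < \<psi>" by (simp add: \<psi>_def)
    define dF where "dF = F (Suc n) - F n"
    have dFb: "\<bar>dF - Hent p i\<bar> \<le> 2 * \<psi>"
      using df_bound[OF q, of n] unfolding dF_def F_def Hent_eq \<psi>_def q_def[symmetric] r_def[symmetric] rq
      by simp
    define dG where "dG = r ^ n * real (Suc n) - r ^ (n - 1) * real n"
    have dGb: "\<bar>dG\<bar> \<le> 2 * Gb * \<psi>"
    proof -
      obtain m where m: "n = Suc m" using n by (cases n) auto
      have rm: "0 \<le> r ^ m" "r ^ Suc m \<le> r ^ m" using r by (auto intro: power_decreasing)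
      have "\<bar>dG\<bar> \<le> \<bar>r ^ n * real (Suc n)\<bar> + \<bar>r ^ (n - 1) * real n\<bar>"
        unfolding dG_def by (rule abs_triangle_ineq4)
      also have "\<dots> = r ^ Suc m * (real m + 2) + r ^ m * (real m + 1)"
        unfolding m using r by (simp add: abs_mult add.commute)
      also have "\<dots> \<le> r ^ m * (real m + 2) + r ^ m * (real m + 2)"
        using rm by (intro add_mono mult_right_mono mult_left_mono) auto
      also have "\<dots> = 2 * (r ^ m * (real m + 2))" by simp
      also have "r ^ m * (real m + 2) \<le> Gb * \<psi>"
      proof -
        have "(r ^ m * (real m + 2)) * (real m + 2) \<le> Gb" using Gb(2)[of m] by (simp add: power2_eq_square algebra_simps)
        then show ?thesis unfolding \<psi>_def m by (simp add: field_simps)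
      qed
      finally show ?thesis by simp
    qed
    have "eta2 p i (Suc n) - eta2 p i n = 1 - ((1 / H) * dF + cc + \<Gamma> * dG)"
      unfolding eta2_def eta1_eq dF_def dG_def by (simp add: algebra_simps)
    also have "\<dots> = - ((dF - Hent p i) / H) - \<Gamma> * dG + (1 - Hent p i / H - cc)"
      using H0 by (simp add: field_simps)
    also have "\<dots> = - ((dF - Hent p i) / H) - \<Gamma> * dG" using canc by simp
    finally have eq: "eta2 p i (Suc n) - eta2 p i n = - ((dF - Hent p i) / H) - \<Gamma> * dG" .
    have b1: "\<bar>(dF - Hent p i) / H\<bar> \<le> (2 / H) * \<psi>"
      using dFb H0 by (simp add: abs_div divide_right_mono)
    have b2: "\<bar>\<Gamma> * dG\<bar> \<le> (2 * \<bar>\<Gamma>\<bar> * Gb) * \<psi>"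
    proof -
      have "\<bar>\<Gamma>\<bar> * \<bar>dG\<bar> \<le> \<bar>\<Gamma>\<bar> * (2 * Gb * \<psi>)" using dGb by (intro mult_left_mono) auto
      then show ?thesis by (simp add: abs_mult algebra_simps)
    qed
    have "\<bar>eta2 p i (Suc n) - eta2 p i n\<bar> \<le> (2 / H) * \<psi> + (2 * \<bar>\<Gamma>\<bar> * Gb) * \<psi>"
      unfolding eq using b1 b2 by linarith
    also have "\<dots> = K / (real n + 1)" by (simp add: K_def \<psi>_def add_divide_distrib)
    finally show ?thesis .
  qed
  then show ?thesis using K0 by blast
qed



lemma tele:
  fixes f :: "nat \<Rightarrow> real"
  assumes "\<And>n. \<bar>f (Suc n) - f n\<bar> \<le> A"
  shows "\<bar>f n - f m\<bar> \<le> A * \<bar>real n - real m\<bar>"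
proof -
  have up: "\<bar>f (m + k) - f m\<bar> \<le> A * real k" for m k
  proof (induction k)
    case 0
    then show ?case by simp
  next
    case (Suc k)
    have "\<bar>f (m + Suc k) - f m\<bar> \<le> \<bar>f (Suc (m + k)) - f (m + k)\<bar> + \<bar>f (m + k) - f m\<bar>" by simp
    also have "\<dots> \<le> A + A * real k" using assms[of "m + k"] Suc by simp
    finally show ?case by (simp add: algebra_simps)
  qed
  show ?thesis
  proof (cases "m \<le> n")
    case True
    then obtain k where "n = m + k" using le_Suc_ex by blast
    then show ?thesis using up[of m k] by simp
  next
    case False
    then obtain k where "m = n + k" by (metis le_Suc_ex nat_le_linear)
    then show ?thesis using up[of n k] by (simp add: abs_minus_commute)
  qed
qed

theorem lemma6p6:
  fixes p :: "nat \<Rightarrow> nat \<Rightarrow> real"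
    and M :: "'a measure"
    and X Z :: "nat \<Rightarrow> nat \<Rightarrow> 'a \<Rightarrow> real"
  assumes stoch: "\<And>i. i < 2 \<Longrightarrow> p i 0 + p i 1 = 1"
    and pos: "\<And>i j. i < 2 \<Longrightarrow> j < 2 \<Longrightarrow> 0 < p i j \<and> p i j < 1"
    and nonhalf: "\<exists>i<2. \<exists>j<2. p i j \<noteq> 1 / 2"
    and prob: "prob_space M"
    and measX: "\<And>i n. i < 2 \<Longrightarrow> X i n \<in> borel_measurable M"
    and measZ: "\<And>i n. i < 2 \<Longrightarrow> Z i n \<in> borel_measurable M"
    and sqX: "\<And>i n. i < 2 \<Longrightarrow> integrable M (\<lambda>\<omega>. (X i n \<omega>)\<^sup>2)"
    and sqZ: "\<And>i n. i < 2 \<Longrightarrow> integrable M (\<lambda>\<omega>. (Z i n \<omega>)\<^sup>2)"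
    and init: "\<And>i n \<omega>. i < 2 \<Longrightarrow> n \<le> 1 \<Longrightarrow> \<omega> \<in> space M \<Longrightarrow> X i n \<omega> = 0 \<and> Z i n \<omega> = 0"
    and rec: "\<And>i n. i < 2 \<Longrightarrow> n \<ge> 2 \<Longrightarrow>
       distr M borel (\<lambda>\<omega>. (X i n \<omega>, Z i n \<omega>)) =
       distr (M \<Otimes>\<^sub>M (M \<Otimes>\<^sub>M measure_pmf (binomial_pmf n (p i 0)))) borel
         (\<lambda>(\<omega>1, \<omega>2, k).
            (X 0 k \<omega>1 + X 1 (n - k) \<omega>2 + eta1 p i n,
             Z 0 k \<omega>1 + Z 1 (n - k) \<omega>2 + eta2 p i n))"
  shows "\<exists>C>0. \<forall>i<2. \<forall>n m.
           \<bar>prob_space.expectation M (Z i n) - prob_space.expectation M (Z i m)\<bar>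
             \<le> C * \<bar>real n - real m\<bar>"
proof -
  interpret M: prob_space M by (rule prob)
  define q where "q i = p i 0" for i
  have q: "0 < q i \<and> q i < 1" if "i < 2" for i using pos[OF that, of 0] by (simp add: q_def)
  have iZ: "integrable M (Z i n)" if "i < 2" for i n
    using M.square_integrable_imp_integrable[OF measZ[OF that] sqZ[OF that]] .
  have iX: "integrable M (X i n)" if "i < 2" for i n
    using M.square_integrable_imp_integrable[OF measX[OF that] sqX[OF that]] .
  define a where "a i n = integral\<^sup>L M (Z i n)" for i n
  have recA: "a i n = bsum (q i) n (\<lambda>k. a 0 k + a 1 (n - k)) + eta2 p i n"
    if i: "i < 2" and n: "2 \<le> n" for i n
  proof -
    note R = rec_expect[where M=M and X=X and Z=Z and q="q i" and i=i and n=n, OF prob iX iZ _ _ i]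
    show ?thesis using R rec[OF i n] q[OF i] unfolding a_def q_def by auto
  qed
  obtain K0 where K0: "K0 \<ge> 0" "\<And>n. 2 \<le> n \<Longrightarrow> \<bar>eta2 p 0 (Suc n) - eta2 p 0 n\<bar> \<le> K0 / (real n + 1)"
  proof -
    have "\<exists>K\<ge>0. \<forall>n\<ge>2. \<bar>eta2 p 0 (Suc n) - eta2 p 0 n\<bar> \<le> K / (real n + 1)"
      by (rule toll_bound[where p=p and i=0]) (use stoch pos in auto)
    then show ?thesis using that by blast
  qed
  obtain K1 where K1: "K1 \<ge> 0" "\<And>n. 2 \<le> n \<Longrightarrow> \<bar>eta2 p 1 (Suc n) - eta2 p 1 n\<bar> \<le> K1 / (real n + 1)"
  proof -
    have "\<exists>K\<ge>0. \<forall>n\<ge>2. \<bar>eta2 p 1 (Suc n) - eta2 p 1 n\<bar> \<le> K / (real n + 1)"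
      by (rule toll_bound[where p=p and i=1]) (use stoch pos in auto)
    then show ?thesis using that by blast
  qed
  have tb: "\<bar>eta2 p i (Suc n) - eta2 p i n\<bar> \<le> (K0 + K1) / (real n + 1)"
    if i: "i < 2" and n: "2 \<le> n" for i n
  proof -
    have "K0 / (real n + 1) \<le> (K0 + K1) / (real n + 1)" "K1 / (real n + 1) \<le> (K0 + K1) / (real n + 1)"
      using K0(1) K1(1) by (auto intro: divide_right_mono)
    then show ?thesis using K0(2)[OF n] K1(2)[OF n] i by (auto simp: less_2_cases_iff)
  qed
  obtain A where A: "\<forall>i<2. \<forall>n. \<bar>a i (Suc n) - a i n\<bar> \<le> A"
    using lip_core[of q a "eta2 p" "K0 + K1", OF q recA _ tb] K0(1) K1(1) by auto
  have A0: "0 \<le> A" using A by (meson abs_ge_zero order_trans zero_less_numeral)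
  have "\<forall>i<2. \<forall>n m. \<bar>a i n - a i m\<bar> \<le> (A + 1) * \<bar>real n - real m\<bar>"
  proof (intro allI impI)
    fix i n m assume i: "i < (2::nat)"
    have "\<bar>a i n - a i m\<bar> \<le> A * \<bar>real n - real m\<bar>" using tele[of "a i" A] A i by blast
    also have "\<dots> \<le> (A + 1) * \<bar>real n - real m\<bar>" by (intro mult_right_mono) auto
    finally show "\<bar>a i n - a i m\<bar> \<le> (A + 1) * \<bar>real n - real m\<bar>" .
  qed
  then show ?thesis unfolding a_def using A0 by (intro exI[of _ "A + 1"]) auto
qed

end
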